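(* Let $\mathcal G=(V_{\min},V_{\max},E,w,\lambda)$ be a discounted payoff game. Consider the following procedure: choose an arbitrary joint strategy $\sigma$; then repeat: compute an optimal solution $\nu$ for $f_\sigma$ (a basis valuation of $H$ minimising $f_\sigma$ over all solutions of $H$); if $f_\sigma(\nu)=0$, return $\nu$; otherwise replace $\sigma$ by an arbitrary joint strategy that is better than $\sigma$. Then, for every choice of the initial joint strategy and of the better strategies, the procedure terminates, and the returned valuation is $\mathrm{val}(\mathcal G)$.
   Context: A discounted payoff game (DPG) is a tuple $\mathcal G=(V_{\min},V_{\max},E,w,\lambda)$ where $V=V_{\min}\cup V_{\max}$ is a finite set of vertices partitioned into disjoint sets $V_{\min}$ (player Min) and $V_{\max}$ (player Max), $E\subseteq V\times V$ is such that every vertex has at least one outgoing edge, $w:E\to\mathbb R$ and $\lambda:E\to[0,1)$ (write $w_e,\lambda_e$). The outcome of an infinite play $e_0e_1\ldots$ is $\sum_{i\ge0}w_{e_i}\prod_{j<i}\lambda_{e_j}$. A joint strategy is a map $\sigma:V\to V$ with $(v,\sigma(v))\in E$ for all $v$ (its restrictions to $V_{\min},V_{\max}$ being positional strategies of the two players). The value $\mathrm{val}(\mathcal G)(v)$ is $\sup_{\sigma_{\max}}\inf_{\sigma_{\min}}$ of the outcome of the play from $v$ (positional determinacy holds). $H$ is the system of inequations over $x\in\mathbb R^V$ containing, for each edge $e=(v,v')$, $x(v)\ge w_e+\lambda_e x(v')$ if $v\in V_{\max}$ and $x(v)\le w_e+\lambda_e x(v')$ if $v\in V_{\min}$. $\mathsf{offset}(x,(v,v'))=x(v)-(w_{(v,v')}+\lambda_{(v,v')}x(v'))$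 if $v\in V_{\max}$, and $(w_{(v,v')}+\lambda_{(v,v')}x(v'))-x(v)$ otherwise. For a joint strategy $\sigma$, $f_\sigma(x)=\sum_{v\in V}\mathsf{offset}(x,(v,\sigma(v)))$. A basis of $H$ is a set of $|V|$ inequations of $H$ whose equality versions have a unique common solution; if that solution satisfies $H$ it is the basis valuation. A joint strategy $\sigma'$ is better than $\sigma$ iff $\min\{f_{\sigma'}(x)\mid x \text{ solves } H\}<\min\{f_{\sigma}(x)\mid x\text{ solves } H\}$. *)

theory Defs
  imports Complex_Main
begin

definition is_dpg :: "'v::finite set \<Rightarrow> 'v set \<Rightarrow> ('v \<times> 'v) set \<Rightarrow> ('v \<times> 'v \<Rightarrow> real) \<Rightarrow> ('v \<times> 'v \<Rightarrow> real) \<Rightarrow> bool" where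
  "is_dpg Vmin Vmax E w lam \<longleftrightarrow>
     Vmin \<inter> Vmax = {} \<and> Vmin \<union> Vmax = UNIV \<and>
     (\<forall>v. \<exists>v'. (v, v') \<in> E) \<and>
     (\<forall>e\<in>E. 0 \<le> lam e \<and> lam e < 1)"

definition joint_strategy :: "('v \<times> 'v) set \<Rightarrow> ('v \<Rightarrow> 'v) \<Rightarrow> bool" where
  "joint_strategy E \<sigma> \<longleftrightarrow> (\<forall>v. (v, \<sigma> v) \<in> E)"

definition play :: "('v \<Rightarrow> 'v) \<Rightarrow> 'v \<Rightarrow> nat \<Rightarrow> 'v" where
  "play \<sigma> v n = (\<sigma> ^^ n) v"

definition outcome :: "('v \<times> 'v \<Rightarrow> real) \<Rightarrow> ('v \<times> 'v \<Rightarrow> real) \<Rightarrow> ('v \<Rightarrow> 'v) \<Rightarrow> 'v \<Rightarrow> real" where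
  "outcome w lam \<sigma> v =
     (\<Sum>i. w (play \<sigma> v i, play \<sigma> v (Suc i)) *
            (\<Prod>j<i. lam (play \<sigma> v j, play \<sigma> v (Suc j))))"

definition combine :: "'v set \<Rightarrow> ('v \<Rightarrow> 'v) \<Rightarrow> ('v \<Rightarrow> 'v) \<Rightarrow> 'v \<Rightarrow> 'v" where
  "combine Vmax \<sigma>max \<sigma>min = (\<lambda>u. if u \<in> Vmax then \<sigma>max u else \<sigma>min u)"

definition game_val :: "'v set \<Rightarrow> ('v \<times> 'v) set \<Rightarrow> ('v \<times> 'v \<Rightarrow> real) \<Rightarrow> ('v \<times> 'v \<Rightarrow> real) \<Rightarrow> 'v \<Rightarrow> real" where
  "game_val Vmax E w lam v =
     (SUP \<sigma>1\<in>{\<sigma>. joint_strategy E \<sigma>}. INF \<sigma>2\<in>{\<sigma>. joint_strategy E \<sigma>}.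
        outcome w lam (combine Vmax \<sigma>1 \<sigma>2) v)"

definition solves_H :: "'v set \<Rightarrow> ('v \<times> 'v) set \<Rightarrow> ('v \<times> 'v \<Rightarrow> real) \<Rightarrow> ('v \<times> 'v \<Rightarrow> real) \<Rightarrow> ('v \<Rightarrow> real) \<Rightarrow> bool" where
  "solves_H Vmax E w lam x \<longleftrightarrow>
     (\<forall>(v, v')\<in>E. if v \<in> Vmax then x v \<ge> w (v, v') + lam (v, v') * x v'
                              else x v \<le> w (v, v') + lam (v, v') * x v')"

definition offset :: "'v set \<Rightarrow> ('v \<times> 'v \<Rightarrow> real) \<Rightarrow> ('v \<times> 'v \<Rightarrow> real) \<Rightarrow> ('v \<Rightarrow> real) \<Rightarrow> 'v \<times> 'v \<Rightarrow> real" where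
  "offset Vmax w lam x e =
     (if fst e \<in> Vmax then x (fst e) - (w e + lam e * x (snd e))
      else (w e + lam e * x (snd e)) - x (fst e))"

definition f_strat :: "'v::finite set \<Rightarrow> ('v \<times> 'v \<Rightarrow> real) \<Rightarrow> ('v \<times> 'v \<Rightarrow> real) \<Rightarrow> ('v \<Rightarrow> 'v) \<Rightarrow> ('v \<Rightarrow> real) \<Rightarrow> real" where
  "f_strat Vmax w lam \<sigma> x = (\<Sum>v\<in>UNIV. offset Vmax w lam x (v, \<sigma> v))"

definition is_basis :: "('v::finite \<times> 'v) set \<Rightarrow> ('v \<times> 'v \<Rightarrow> real) \<Rightarrow> ('v \<times> 'v \<Rightarrow> real) \<Rightarrow> ('v \<times> 'v) set \<Rightarrow> bool" where
  "is_basis E w lam B \<longleftrightarrow> B \<subseteq> E \<and> card B = card (UNIV :: 'v set) \<and>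
     (\<exists>!x. \<forall>(v, v')\<in>B. x v = w (v, v') + lam (v, v') * x v')"

definition basis_valuation :: "'v::finite set \<Rightarrow> ('v \<times> 'v) set \<Rightarrow> ('v \<times> 'v \<Rightarrow> real) \<Rightarrow> ('v \<times> 'v \<Rightarrow> real) \<Rightarrow> ('v \<Rightarrow> real) \<Rightarrow> bool" where
  "basis_valuation Vmax E w lam x \<longleftrightarrow>
     (\<exists>B. is_basis E w lam B \<and> (\<forall>(v, v')\<in>B. x v = w (v, v') + lam (v, v') * x v')) \<and>
     solves_H Vmax E w lam x"

definition optimal_for :: "'v::finite set \<Rightarrow> ('v \<times> 'v) set \<Rightarrow> ('v \<times> 'v \<Rightarrow> real) \<Rightarrow> ('v \<times> 'v \<Rightarrow> real) \<Rightarrow> ('v \<Rightarrow> 'v) \<Rightarrow> ('v \<Rightarrow> real) \<Rightarrow> bool" where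
  "optimal_for Vmax E w lam \<sigma> \<nu> \<longleftrightarrow> basis_valuation Vmax E w lam \<nu> \<and>
     (\<forall>x. solves_H Vmax E w lam x \<longrightarrow> f_strat Vmax w lam \<sigma> \<nu> \<le> f_strat Vmax w lam \<sigma> x)"

definition fmin :: "'v::finite set \<Rightarrow> ('v \<times> 'v) set \<Rightarrow> ('v \<times> 'v \<Rightarrow> real) \<Rightarrow> ('v \<times> 'v \<Rightarrow> real) \<Rightarrow> ('v \<Rightarrow> 'v) \<Rightarrow> real" where
  "fmin Vmax E w lam \<sigma> = Inf (f_strat Vmax w lam \<sigma> ` {x. solves_H Vmax E w lam x})"

definition better :: "'v::finite set \<Rightarrow> ('v \<times> 'v) set \<Rightarrow> ('v \<times> 'v \<Rightarrow> real) \<Rightarrow> ('v \<times> 'v \<Rightarrow> real) \<Rightarrow> ('v \<Rightarrow> 'v) \<Rightarrow> ('v \<Rightarrow> 'v) \<Rightarrow> bool" where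
  "better Vmax E w lam \<sigma>' \<sigma> \<longleftrightarrow> fmin Vmax E w lam \<sigma>' < fmin Vmax E w lam \<sigma>"

end

theory Submission
  imports Defs "HOL-Analysis.Analysis"
begin

locale dpg =
  fixes Vmin Vmax :: "'v::finite set" and E :: "('v \<times> 'v) set"
    and w lam :: "'v \<times> 'v \<Rightarrow> real"
  assumes dpg: "is_dpg Vmin Vmax E w lam"
begin

lemma finE: "finite E" by simp
lemma lam_nonneg: "e \<in> E \<Longrightarrow> 0 \<le> lam e" using dpg unfolding is_dpg_def by auto
lemma lam_lt1: "e \<in> E \<Longrightarrow> lam e < 1" using dpg unfolding is_dpg_def by auto
lemma has_succ: "\<exists>v'. (v, v') \<in> E" using dpg unfolding is_dpg_def by auto

definition L :: real where "L = Max (insert 0 (lam ` E))"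
lemma L_nonneg: "0 \<le> L" unfolding L_def by simp
lemma L_lt1: "L < 1" unfolding L_def using lam_lt1 by (simp add: Max_less_iff)
lemma lam_le_L: "e \<in> E \<Longrightarrow> lam e \<le> L" unfolding L_def by simp

definition succs :: "'v \<Rightarrow> 'v set" where "succs v = {v'. (v, v') \<in> E}"
lemma succs_fin: "finite (succs v)" by simp
lemma succs_ne: "succs v \<noteq> {}" using has_succ unfolding succs_def by auto

definition T :: "('v \<Rightarrow> real) \<Rightarrow> 'v \<Rightarrow> real" where
  "T x v = (if v \<in> Vmax then Max ((\<lambda>v'. w (v, v') + lam (v, v') * x v') ` succs v)
            else Min ((\<lambda>v'. w (v, v') + lam (v, v') * x v') ` succs v))"

lemma Max_diff_le:
  fixes f g :: "'a \<Rightarrow> real"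
  assumes "finite A" "A \<noteq> {}" "\<And>a. a \<in> A \<Longrightarrow> \<bar>f a - g a\<bar> \<le> M"
  shows "\<bar>Max (f ` A) - Max (g ` A)\<bar> \<le> M" and "\<bar>Min (f ` A) - Min (g ` A)\<bar> \<le> M"
proof -
  have "Max (f ` A) \<in> f ` A" using assms(1,2) by (intro Max_in) auto
  then obtain a1 where a1: "a1 \<in> A" "Max (f ` A) = f a1" by auto
  have "Max (g ` A) \<in> g ` A" using assms(1,2) by (intro Max_in) auto
  then obtain a2 where a2: "a2 \<in> A" "Max (g ` A) = g a2" by auto
  have x1: "g a1 \<le> Max (g ` A)" using assms(1) a1(1) by (intro Max_ge) auto
  have x2: "f a2 \<le> Max (f ` A)" using assms(1) a2(1) by (intro Max_ge) auto
  show "\<bar>Max (f ` A) - Max (g ` A)\<bar> \<le> M" using assms(3)[OF a1(1)] assms(3)[OF a2(1)] a1 a2 x1 x2 by linarith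
next
  have "Min (f ` A) \<in> f ` A" using assms(1,2) by (intro Min_in) auto
  then obtain a1 where a1: "a1 \<in> A" "Min (f ` A) = f a1" by auto
  have "Min (g ` A) \<in> g ` A" using assms(1,2) by (intro Min_in) auto
  then obtain a2 where a2: "a2 \<in> A" "Min (g ` A) = g a2" by auto
  have x1: "g a1 \<ge> Min (g ` A)" using assms(1) a1(1) by (intro Min_le) auto
  have x2: "f a2 \<ge> Min (f ` A)" using assms(1) a2(1) by (intro Min_le) auto
  show "\<bar>Min (f ` A) - Min (g ` A)\<bar> \<le> M" using assms(3)[OF a1(1)] assms(3)[OF a2(1)] a1 a2 x1 x2 by linarith
qed

lemma T_lip:
  assumes "\<And>u. \<bar>a u - b u\<bar> \<le> M"
  shows "\<bar>T a v - T b v\<bar> \<le> L * M"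
proof -
  have M0: "0 \<le> M" using assms[of v] by linarith
  define fa where "fa = (\<lambda>v'. w (v, v') + lam (v, v') * a v')"
  define fb where "fb = (\<lambda>v'. w (v, v') + lam (v, v') * b v')"
  have *: "\<bar>fa v' - fb v'\<bar> \<le> L * M" if "v' \<in> succs v" for v'
  proof -
    have e: "(v, v') \<in> E" using that unfolding succs_def by auto
    have "fa v' - fb v' = lam (v, v') * (a v' - b v')"
      unfolding fa_def fb_def by (simp add: algebra_simps)
    then have "\<bar>fa v' - fb v'\<bar> = lam (v, v') * \<bar>a v' - b v'\<bar>" using lam_nonneg[OF e]
      by (simp add: abs_mult)
    also have "\<dots> \<le> L * M"
      by (rule mult_mono[OF lam_le_L[OF e] assms[of v'] L_nonneg abs_ge_zero])
    finally show ?thesis .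
  qed
  have A: "T a v = (if v \<in> Vmax then Max (fa ` succs v) else Min (fa ` succs v))"
    unfolding T_def fa_def by simp
  have B: "T b v = (if v \<in> Vmax then Max (fb ` succs v) else Min (fb ` succs v))"
    unfolding T_def fb_def by simp
  have 1: "\<bar>Max (fa ` succs v) - Max (fb ` succs v)\<bar> \<le> L * M"
    by (rule Max_diff_le(1)[OF succs_fin succs_ne]) (rule *)
  have 2: "\<bar>Min (fa ` succs v) - Min (fb ` succs v)\<bar> \<le> L * M"
    by (rule Max_diff_le(2)[OF succs_fin succs_ne]) (rule *)
  show ?thesis unfolding A B using 1 2 by simp
qed

lemma fixpoint_exists: "\<exists>y. T y = y"
proof -
  define X where "X n = (T ^^ n) (\<lambda>_. 0)" for n
  have XS: "X (Suc n) = T (X n)" for n unfolding X_def by simp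
  define C where "C = (\<Sum>u\<in>UNIV. \<bar>X 1 u - X 0 u\<bar>)"
  have bnd: "\<bar>X (Suc n) u - X n u\<bar> \<le> L ^ n * C" for n u
  proof (induction n arbitrary: u)
    case 0
    then show ?case unfolding C_def
      using member_le_sum[of u UNIV "\<lambda>u. \<bar>X 1 u - X 0 u\<bar>"] by simp
  next
    case (Suc n)
    have "\<bar>T (X (Suc n)) u - T (X n) u\<bar> \<le> L * (L ^ n * C)" by (rule T_lip) (rule Suc)
    then show ?case unfolding XS[symmetric] by (simp add: mult.assoc)
  qed
  have summ: "summable (\<lambda>n. X (Suc n) u - X n u)" for u
  proof (rule summable_comparison_test)
    show "\<exists>N. \<forall>n\<ge>N. norm (X (Suc n) u - X n u) \<le> C * L ^ n" using bnd by (metis mult.commute real_norm_def)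
    show "summable (\<lambda>n. C * L ^ n)" using L_nonneg L_lt1 by (intro summable_mult summable_geometric) simp
  qed
  define y where "y u = (\<Sum>n. X (Suc n) u - X n u)" for u
  have X0: "X 0 u = 0" for u unfolding X_def by simp
  have conv: "(\<lambda>n. X n u) \<longlonglongrightarrow> y u" for u
  proof -
    have "(\<lambda>n. \<Sum>i<n. X (Suc i) u - X i u) \<longlonglongrightarrow> y u" unfolding y_def by (rule summable_LIMSEQ[OF summ])
    moreover have "(\<Sum>i<n. X (Suc i) u - X i u) = X n u" for n
      using sum_lessThan_telescope[of "\<lambda>i. X i u" n] X0 by simp
    ultimately show ?thesis by simp
  qed
  have "T y u = y u" for u
  proof -
    have d0: "(\<lambda>n. \<Sum>z\<in>UNIV. \<bar>X n z - y z\<bar>) \<longlonglongrightarrow> 0"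
    proof -
      have "(\<lambda>n. \<bar>X n z - y z\<bar>) \<longlonglongrightarrow> 0" for z
        by (intro tendsto_rabs_zero LIM_zero conv)
      then show ?thesis using tendsto_null_sum[of UNIV "\<lambda>n z. \<bar>X n z - y z\<bar>"] by simp
    qed
    have "(\<lambda>n. T (X n) u - T y u) \<longlonglongrightarrow> 0"
    proof (rule Lim_null_comparison[OF _ d0])
      show "\<forall>\<^sub>F n in sequentially. norm (T (X n) u - T y u) \<le> (\<Sum>z\<in>UNIV. \<bar>X n z - y z\<bar>)"
      proof (rule always_eventually, rule allI)
        fix n
        have "\<bar>T (X n) u - T y u\<bar> \<le> L * (\<Sum>z\<in>UNIV. \<bar>X n z - y z\<bar>)"
          by (rule T_lip) (rule member_le_sum, auto)
        also have "\<dots> \<le> (\<Sum>z\<in>UNIV. \<bar>X n z - y z\<bar>)"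
          using L_lt1 L_nonneg by (intro mult_left_le_one_le) (auto intro: sum_nonneg)
        finally show "norm (T (X n) u - T y u) \<le> (\<Sum>z\<in>UNIV. \<bar>X n z - y z\<bar>)" by simp
      qed
    qed
    then have "(\<lambda>n. T (X n) u) \<longlonglongrightarrow> T y u" by (simp add: LIM_zero_iff)
    moreover have "(\<lambda>n. T (X n) u) \<longlonglongrightarrow> y u"
      using conv[of u] unfolding XS[symmetric] by (rule LIMSEQ_Suc)
    ultimately show ?thesis using LIMSEQ_unique by blast
  qed
  then have "T y = y" by (simp add: fun_eq_iff)
  then show ?thesis by blast
qed


definition W :: real where "W = Max (insert 0 ((\<lambda>e. \<bar>w e\<bar>) ` E))"
lemma W_nonneg: "0 \<le> W" unfolding W_def by simp
lemma w_le_W: "e \<in> E \<Longrightarrow> \<bar>w e\<bar> \<le> W" unfolding W_def by simp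

lemma play_Suc: "play \<pi> v (Suc i) = \<pi> (play \<pi> v i)" unfolding play_def by simp
lemma play_0: "play \<pi> v 0 = v" unfolding play_def by simp

lemma outcome_bounds:
  fixes \<nu> :: "'v \<Rightarrow> real" and \<pi> :: "'v \<Rightarrow> 'v"
  assumes js: "joint_strategy E \<pi>"
  defines "g \<equiv> (\<lambda>u. \<nu> u - (w (u, \<pi> u) + lam (u, \<pi> u) * \<nu> (\<pi> u)))"
  shows "((\<forall>u. g u \<le> 0) \<longrightarrow> \<nu> v \<le> outcome w lam \<pi> v) \<and> ((\<forall>u. g u \<ge> 0) \<longrightarrow> \<nu> v \<ge> outcome w lam \<pi> v)"
proof -
  define p where "p i = play \<pi> v i" for i
  define e where "e i = (p i, p (Suc i))" for i
  define P where "P i = (\<Prod>j<i. lam (e j))" for i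
  have pS: "p (Suc i) = \<pi> (p i)" for i unfolding p_def by (rule play_Suc)
  have eE: "e i \<in> E" for i using js unfolding e_def pS joint_strategy_def by simp
  have P0: "0 \<le> P i" for i unfolding P_def using eE lam_nonneg by (intro prod_nonneg) auto
  have PL: "P i \<le> L ^ i" for i
  proof -
    have "P i \<le> (\<Prod>j<i. L)" unfolding P_def
      using eE lam_nonneg lam_le_L by (intro prod_mono) auto
    then show ?thesis by simp
  qed
  have PS: "P (Suc i) = P i * lam (e i)" for i unfolding P_def by simp
  have ident: "\<nu> v = (\<Sum>i<n. w (e i) * P i) + P n * \<nu> (p n) + (\<Sum>i<n. P i * g (p i))" for n
  proof (induction n)
    case 0
    then show ?case by (simp add: P_def p_def play_0)
  next
    case (Suc n)
    have g: "\<nu> (p n) = g (p n) + w (e n) + lam (e n) * \<nu> (p (Suc n))"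
      unfolding g_def e_def pS by simp
    have "P n * \<nu> (p n) = P n * g (p n) + w (e n) * P n + P (Suc n) * \<nu> (p (Suc n))"
      unfolding g PS by (simp add: algebra_simps)
    then show ?case using Suc by simp
  qed
  have oc: "outcome w lam \<pi> v = (\<Sum>i. w (e i) * P i)"
    unfolding outcome_def P_def e_def p_def by simp
  have summ: "summable (\<lambda>i. w (e i) * P i)"
  proof (rule summable_comparison_test)
    show "\<exists>N. \<forall>n\<ge>N. norm (w (e n) * P n) \<le> W * L ^ n"
    proof (intro exI allI impI)
      fix n :: nat
      have "\<bar>w (e n)\<bar> * P n \<le> W * L ^ n"
        using w_le_W[OF eE] PL P0 W_nonneg by (intro mult_mono) auto
      then show "norm (w (e n) * P n) \<le> W * L ^ n" using P0 by (simp add: abs_mult)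
    qed
    show "summable (\<lambda>n. W * L ^ n)" using L_nonneg L_lt1 by (intro summable_mult summable_geometric) simp
  qed
  define N where "N = (\<Sum>u\<in>UNIV. \<bar>\<nu> u\<bar>)"
  have t1: "(\<lambda>n. (\<Sum>i<n. w (e i) * P i)) \<longlonglongrightarrow> outcome w lam \<pi> v"
    unfolding oc by (rule summable_LIMSEQ[OF summ])
  have t2: "(\<lambda>n. P n * \<nu> (p n)) \<longlonglongrightarrow> 0"
  proof (rule Lim_null_comparison)
    have LN: "(\<lambda>n. L ^ n) \<longlonglongrightarrow> 0" using L_nonneg L_lt1 by (intro LIMSEQ_power_zero) simp
    show "((\<lambda>n. L ^ n * N) \<longlongrightarrow> 0) sequentially"
      using tendsto_mult[OF LN tendsto_const[of N]] by simp
    show "\<forall>\<^sub>F n in sequentially. norm (P n * \<nu> (p n)) \<le> L ^ n * N"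
    proof (rule always_eventually, rule allI)
      fix n
      have "\<bar>\<nu> (p n)\<bar> \<le> N" unfolding N_def by (rule member_le_sum) auto
      then have "P n * \<bar>\<nu> (p n)\<bar> \<le> L ^ n * N"
        using PL[of n] P0[of n] by (intro mult_mono) auto
      then show "norm (P n * \<nu> (p n)) \<le> L ^ n * N" using P0[of n] by (simp add: abs_mult)
    qed
  qed
  have t: "(\<lambda>n. \<nu> v - (\<Sum>i<n. P i * g (p i))) \<longlonglongrightarrow> outcome w lam \<pi> v"
  proof -
    have "(\<lambda>n. (\<Sum>i<n. w (e i) * P i) + P n * \<nu> (p n)) \<longlonglongrightarrow> outcome w lam \<pi> v + 0"
      by (rule tendsto_add[OF t1 t2])
    moreover have "\<nu> v - (\<Sum>i<n. P i * g (p i)) = (\<Sum>i<n. w (e i) * P i) + P n * \<nu> (p n)" for n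
      using ident[of n] by simp
    ultimately show ?thesis by simp
  qed
  show ?thesis
  proof (intro conjI impI)
    assume "\<forall>u. g u \<le> 0"
    then have "\<nu> v \<le> \<nu> v - (\<Sum>i<n. P i * g (p i))" for n
      using P0 by (simp add: sum_nonpos mult_nonneg_nonpos)
    then show "\<nu> v \<le> outcome w lam \<pi> v" using t by (intro LIMSEQ_le_const) auto
  next
    assume "\<forall>u. g u \<ge> 0"
    then have "\<nu> v \<ge> \<nu> v - (\<Sum>i<n. P i * g (p i))" for n
      using P0 by (simp add: sum_nonneg)
    then show "\<nu> v \<ge> outcome w lam \<pi> v" using t by (intro LIMSEQ_le_const2) auto
  qed
qed


lemma solves_H_iff: "solves_H Vmax E w lam x \<longleftrightarrow> (\<forall>e\<in>E. 0 \<le> offset Vmax w lam x e)"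
  unfolding solves_H_def offset_def by (auto split: if_splits)

lemma fin_strats: "finite {\<sigma>::'v \<Rightarrow> 'v. joint_strategy E \<sigma>}" by simp

lemma val_eq:
  assumes H: "solves_H Vmax E w lam \<nu>" and js: "joint_strategy E \<tau>"
    and tight: "\<And>u. \<nu> u = w (u, \<tau> u) + lam (u, \<tau> u) * \<nu> (\<tau> u)"
  shows "game_val Vmax E w lam = \<nu>"
proof
  fix v
  let ?S = "{\<sigma>::'v \<Rightarrow> 'v. joint_strategy E \<sigma>}"
  have Hi: "\<And>u u'. (u, u') \<in> E \<Longrightarrow> (if u \<in> Vmax then \<nu> u \<ge> w (u, u') + lam (u, u') * \<nu> u'
                              else \<nu> u \<le> w (u, u') + lam (u, u') * \<nu> u')"
    using H unfolding solves_H_def by auto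
  have cjs: "joint_strategy E (combine Vmax a b)" if "joint_strategy E a" "joint_strategy E b" for a b
    using that unfolding joint_strategy_def combine_def by auto
  have up: "outcome w lam (combine Vmax s1 \<tau>) v \<le> \<nu> v" if s1: "joint_strategy E s1" for s1
  proof -
    let ?p = "combine Vmax s1 \<tau>"
    have "\<forall>u. 0 \<le> \<nu> u - (w (u, ?p u) + lam (u, ?p u) * \<nu> (?p u))"
    proof
      fix u
      show "0 \<le> \<nu> u - (w (u, ?p u) + lam (u, ?p u) * \<nu> (?p u))"
      proof (cases "u \<in> Vmax")
        case True
        have "(u, s1 u) \<in> E" using s1 unfolding joint_strategy_def by auto
        from Hi[OF this] True show ?thesis unfolding combine_def by simp
      next
        case False
        then show ?thesis using tight[of u] unfolding combine_def by simp
      qed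
    qed
    then show ?thesis using outcome_bounds[OF cjs[OF s1 js], of \<nu> v] by blast
  qed
  have lo: "\<nu> v \<le> outcome w lam (combine Vmax \<tau> s2) v" if s2: "joint_strategy E s2" for s2
  proof -
    let ?p = "combine Vmax \<tau> s2"
    have "\<forall>u. \<nu> u - (w (u, ?p u) + lam (u, ?p u) * \<nu> (?p u)) \<le> 0"
    proof
      fix u
      show "\<nu> u - (w (u, ?p u) + lam (u, ?p u) * \<nu> (?p u)) \<le> 0"
      proof (cases "u \<in> Vmax")
        case False
        have "(u, s2 u) \<in> E" using s2 unfolding joint_strategy_def by auto
        from Hi[OF this] False show ?thesis unfolding combine_def by simp
      next
        case True
        then show ?thesis using tight[of u] unfolding combine_def by simp
      qed
    qed
    then show ?thesis using outcome_bounds[OF cjs[OF js s2], of \<nu> v] by blast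
  qed
  have tS: "\<tau> \<in> ?S" using js by simp
  have ne: "?S \<noteq> {}" using tS by blast
  have inf_up: "(INF s2\<in>?S. outcome w lam (combine Vmax s1 s2) v) \<le> \<nu> v" if "s1 \<in> ?S" for s1
  proof -
    have "(INF s2\<in>?S. outcome w lam (combine Vmax s1 s2) v) \<le> outcome w lam (combine Vmax s1 \<tau>) v"
      by (rule cINF_lower[OF _ tS]) (intro bdd_below_finite finite_imageI fin_strats)
    also have "\<dots> \<le> \<nu> v" using up that by simp
    finally show ?thesis .
  qed
  have inf_lo: "\<nu> v \<le> (INF s2\<in>?S. outcome w lam (combine Vmax \<tau> s2) v)"
    by (rule cINF_greatest[OF ne]) (use lo in simp)
  have "(SUP s1\<in>?S. INF s2\<in>?S. outcome w lam (combine Vmax s1 s2) v) = \<nu> v"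
  proof (rule antisym)
    show "(SUP s1\<in>?S. INF s2\<in>?S. outcome w lam (combine Vmax s1 s2) v) \<le> \<nu> v"
      by (rule cSUP_least[OF ne]) (rule inf_up)
    have "(INF s2\<in>?S. outcome w lam (combine Vmax \<tau> s2) v) \<le> (SUP s1\<in>?S. INF s2\<in>?S. outcome w lam (combine Vmax s1 s2) v)"
      by (rule cSUP_upper[OF tS]) (intro bdd_above_finite finite_imageI fin_strats)
    then show "\<nu> v \<le> (SUP s1\<in>?S. INF s2\<in>?S. outcome w lam (combine Vmax s1 s2) v)"
      using inf_lo by linarith
  qed
  then show "game_val Vmax E w lam v = \<nu> v" unfolding game_val_def by simp
qed

lemma fixpoint_props:
  assumes fp: "T y = y"
  shows "solves_H Vmax E w lam y" and "\<exists>\<tau>. joint_strategy E \<tau> \<and> (\<forall>u. y u = w (u, \<tau> u) + lam (u, \<tau> u) * y (\<tau> u))"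
proof -
  define f where "f u = (\<lambda>v'. w (u, v') + lam (u, v') * y v')" for u
  have Tu: "y u = (if u \<in> Vmax then Max (f u ` succs u) else Min (f u ` succs u))" for u
    using fun_cong[OF fp, of u] unfolding T_def f_def by simp
  show "solves_H Vmax E w lam y" unfolding solves_H_def
  proof (intro ballI, clarify)
    fix u u' assume e: "(u, u') \<in> E"
    then have s: "u' \<in> succs u" unfolding succs_def by simp
    show "if u \<in> Vmax then w (u, u') + lam (u, u') * y u' \<le> y u else y u \<le> w (u, u') + lam (u, u') * y u'"
    proof (cases "u \<in> Vmax")
      case True
      have "f u u' \<le> Max (f u ` succs u)" using s by (intro Max_ge) auto
      then show ?thesis using True Tu[of u] unfolding f_def by simp
    next
      case False
      have "Min (f u ` succs u) \<le> f u u'" using s by (intro Min_le) auto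
      then show ?thesis using False Tu[of u] unfolding f_def by simp
    qed
  qed
  have "\<exists>u'. (u, u') \<in> E \<and> y u = f u u'" for u
  proof -
    have "Max (f u ` succs u) \<in> f u ` succs u" "Min (f u ` succs u) \<in> f u ` succs u"
      using succs_ne[of u] by (intro Max_in Min_in; simp)+
    then have "y u \<in> f u ` succs u" using Tu[of u] by (simp split: if_splits)
    then show ?thesis unfolding succs_def by auto
  qed
  then obtain \<tau> where "\<forall>u. (u, \<tau> u) \<in> E \<and> y u = f u (\<tau> u)" by metis
  then show "\<exists>\<tau>. joint_strategy E \<tau> \<and> (\<forall>u. y u = w (u, \<tau> u) + lam (u, \<tau> u) * y (\<tau> u))"
    unfolding joint_strategy_def f_def by blast
qed


definition row :: "'v \<times> 'v \<Rightarrow> real^'v" where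
  "row e = axis (fst e) 1 - lam e *\<^sub>R axis (snd e) 1"

lemma row_inner: "row e \<bullet> (\<chi> u. d u) = d (fst e) - lam e * d (snd e)"
  unfolding row_def by (simp add: inner_diff_left inner_axis')

definition tight :: "('v \<Rightarrow> real) \<Rightarrow> ('v \<times> 'v) set" where
  "tight x = {e\<in>E. offset Vmax w lam x e = 0}"

definition R :: "('v \<Rightarrow> real) \<Rightarrow> (real^'v) set" where
  "R x = row ` tight x"

abbreviation ol :: "('v \<Rightarrow> real) \<Rightarrow> 'v \<times> 'v \<Rightarrow> real" where
  "ol d e \<equiv> offset Vmax (\<lambda>_. 0) lam d e"

lemma offset_add: "offset Vmax w lam (\<lambda>u. x u + t * d u) e = offset Vmax w lam x e + t * ol d e"
  unfolding offset_def by (simp add: algebra_simps)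

lemma ol_neg: "ol (\<lambda>u. - d u) e = - ol d e"
  unfolding offset_def by (simp add: algebra_simps)

lemma ol_row: "ol d e = (if fst e \<in> Vmax then row e \<bullet> (\<chi> u. d u) else - (row e \<bullet> (\<chi> u. d u)))"
  unfolding offset_def row_inner by (simp add: algebra_simps)

lemma tight_eq: "e \<in> tight x \<longleftrightarrow> e \<in> E \<and> x (fst e) = w e + lam e * x (snd e)"
  unfolding tight_def offset_def by auto

lemma f_add: "f_strat Vmax w lam \<sigma> (\<lambda>u. x u + t * d u) = f_strat Vmax w lam \<sigma> x + t * f_strat Vmax (\<lambda>_. 0) lam \<sigma> d"
  unfolding f_strat_def offset_add by (simp add: sum.distrib sum_distrib_left)

lemma f_neg: "f_strat Vmax (\<lambda>_. 0) lam \<sigma> (\<lambda>u. - d u) = - f_strat Vmax (\<lambda>_. 0) lam \<sigma> d"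
  unfolding f_strat_def ol_neg by (simp add: sum_negf)

lemma f_nonneg:
  assumes "joint_strategy E \<sigma>" "solves_H Vmax E w lam x"
  shows "0 \<le> f_strat Vmax w lam \<sigma> x"
  unfolding f_strat_def using assms unfolding solves_H_iff joint_strategy_def
  by (intro sum_nonneg) auto

lemma pointed:
  assumes "d \<noteq> (\<lambda>_. 0)"
  shows "\<exists>e\<in>E. ol d e \<noteq> 0"
proof (rule ccontr)
  assume "\<not> ?thesis"
  then have z: "\<forall>e\<in>E. ol d e = 0" by blast
  have "Max (range (\<lambda>u. \<bar>d u\<bar>)) \<in> range (\<lambda>u. \<bar>d u\<bar>)" by (intro Max_in) auto
  then obtain v where v: "Max (range (\<lambda>u. \<bar>d u\<bar>)) = \<bar>d v\<bar>" by blast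
  have mx: "\<bar>d u\<bar> \<le> \<bar>d v\<bar>" for u unfolding v[symmetric] by (intro Max_ge) auto
  obtain v' where e: "(v, v') \<in> E" using has_succ by blast
  have "d v = lam (v, v') * d v'" using z[rule_format, OF e] unfolding offset_def by (auto split: if_splits)
  then have "\<bar>d v\<bar> = lam (v, v') * \<bar>d v'\<bar>" using lam_nonneg[OF e] by (simp add: abs_mult)
  also have "\<dots> \<le> lam (v, v') * \<bar>d v\<bar>" using lam_nonneg[OF e] mx[of v'] by (rule mult_left_mono[rotated])
  finally have "(1 - lam (v, v')) * \<bar>d v\<bar> \<le> 0" by (simp add: algebra_simps)
  moreover have "0 < 1 - lam (v, v')" using lam_lt1[OF e] by simp
  ultimately have "\<bar>d v\<bar> \<le> 0" by (simp add: mult_le_0_iff)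
  then have "d u = 0" for u using mx[of u] by simp
  then have "d = (\<lambda>_. 0)" by (simp add: fun_eq_iff)
  with assms show False by simp
qed

lemma no_descent:
  assumes js: "joint_strategy E \<sigma>" and H: "solves_H Vmax E w lam x"
    and c: "f_strat Vmax (\<lambda>_. 0) lam \<sigma> d < 0"
  shows "\<exists>e\<in>E. ol d e < 0"
proof (rule ccontr)
  assume "\<not> ?thesis"
  then have nn: "\<forall>e\<in>E. 0 \<le> ol d e" by force
  define c where "c = f_strat Vmax (\<lambda>_. 0) lam \<sigma> d"
  define t where "t = (f_strat Vmax w lam \<sigma> x + 1) / (- c)"
  have t0: "0 \<le> t" unfolding t_def using f_nonneg[OF js H] c c_def by (intro divide_nonneg_pos) auto
  have "solves_H Vmax E w lam (\<lambda>u. x u + t * d u)"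
    unfolding solves_H_iff offset_add using H nn t0 unfolding solves_H_iff by (auto intro!: add_nonneg_nonneg)
  then have "0 \<le> f_strat Vmax w lam \<sigma> (\<lambda>u. x u + t * d u)" by (rule f_nonneg[OF js])
  then have "0 \<le> f_strat Vmax w lam \<sigma> x + t * c" unfolding f_add c_def .
  moreover have "t * c = - (f_strat Vmax w lam \<sigma> x + 1)" unfolding t_def using c c_def by (simp add: field_simps)
  ultimately show False by simp
qed

lemma ratio_step:
  assumes H: "solves_H Vmax E w lam x" and tz: "\<forall>e\<in>tight x. ol d e = 0"
    and e0: "e0 \<in> E" "ol d e0 < 0" and c: "f_strat Vmax (\<lambda>_. 0) lam \<sigma> d \<le> 0"
  shows "\<exists>x' e'. solves_H Vmax E w lam x' \<and> f_strat Vmax w lam \<sigma> x' \<le> f_strat Vmax w lam \<sigma> x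
     \<and> tight x \<subseteq> tight x' \<and> e' \<in> tight x' \<and> ol d e' < 0"
proof -
  define D where "D = {e\<in>E. ol d e < 0}"
  define r where "r e = offset Vmax w lam x e / (- ol d e)" for e
  have Dfin: "finite D" unfolding D_def by simp
  have Dne: "D \<noteq> {}" using e0 unfolding D_def by blast
  have "Min (r ` D) \<in> r ` D" using Dfin Dne by (intro Min_in) auto
  then obtain e' where e': "e' \<in> D" "Min (r ` D) = r e'" by auto
  define t where "t = r e'"
  have tle: "t \<le> r e" if "e \<in> D" for e unfolding t_def e'(2)[symmetric] using Dfin that by (intro Min_le) auto
  have Hx: "\<forall>e\<in>E. 0 \<le> offset Vmax w lam x e" using H unfolding solves_H_iff .
  have t0: "0 \<le> t" unfolding t_def r_def using e'(1) Hx unfolding D_def by (intro divide_nonneg_pos) auto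
  define x' where "x' = (\<lambda>u. x u + t * d u)"
  have off': "offset Vmax w lam x' e = offset Vmax w lam x e + t * ol d e" for e unfolding x'_def offset_add ..
  have "solves_H Vmax E w lam x'" unfolding solves_H_iff
  proof
    fix e assume eE: "e \<in> E"
    show "0 \<le> offset Vmax w lam x' e"
    proof (cases "ol d e < 0")
      case True
      then have "e \<in> D" unfolding D_def using eE by simp
      then have "t \<le> offset Vmax w lam x e / (- ol d e)" using tle r_def by simp
      moreover have pos: "0 < - ol d e" using True by simp
      ultimately have "t * (- ol d e) \<le> offset Vmax w lam x e" using pos_le_divide_eq[OF pos] by blast
      then show ?thesis unfolding off' by simp
    next
      case False
      then show ?thesis unfolding off' using Hx eE t0 by simp
    qed
  qed
  moreover have "f_strat Vmax w lam \<sigma> x' \<le> f_strat Vmax w lam \<sigma> x"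
    unfolding x'_def f_add using t0 c by (simp add: mult_nonneg_nonpos)
  moreover have "tight x \<subseteq> tight x'" using tz unfolding tight_def off' by auto
  moreover have "e' \<in> tight x'"
  proof -
    have "ol d e' < 0" "e' \<in> E" using e'(1) unfolding D_def by auto
    then have "offset Vmax w lam x' e' = 0" unfolding off' t_def r_def by simp
    then show ?thesis using \<open>e' \<in> E\<close> unfolding tight_def by simp
  qed
  moreover have "ol d e' < 0" using e'(1) unfolding D_def by auto
  ultimately show ?thesis by blast
qed




lemma DIM_v: "DIM(real^'v) = CARD('v)" by simp

lemma base_case:
  assumes H: "solves_H Vmax E w lam x" and sp: "span (R x) = UNIV"
  shows "basis_valuation Vmax E w lam x"
proof -
  obtain B' where B': "B' \<subseteq> R x" "independent B'" "R x \<subseteq> span B'" "card B' = dim (R x)"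
    by (rule basis_exists)
  have dimR: "dim (R x) = CARD('v)" using sp dim_eq_full[of "R x"] DIM_v by simp
  have "\<forall>b\<in>B'. \<exists>e. e \<in> tight x \<and> row e = b" using B'(1) unfolding R_def by blast
  then obtain ed where ed: "\<forall>b\<in>B'. ed b \<in> tight x \<and> row (ed b) = b" by metis
  define B where "B = ed ` B'"
  have inj: "inj_on ed B'" using ed by (metis inj_onI)
  have cardB: "card B = card (UNIV :: 'v set)" unfolding B_def card_image[OF inj] B'(4) dimR by simp
  have BE: "B \<subseteq> E" unfolding B_def using ed unfolding tight_def by auto
  have Bt: "\<forall>e\<in>B. e \<in> tight x" unfolding B_def using ed by auto
  have xs: "\<forall>(v, v')\<in>B. x v = w (v, v') + lam (v, v') * x v'"
    using Bt unfolding tight_eq by auto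
  have uniq: "y = x" if ys: "\<forall>(v, v')\<in>B. y v = w (v, v') + lam (v, v') * y v'" for y
  proof -
    define z where "z = (\<chi> u. y u - x u)"
    have orth: "orthogonal z b" if "b \<in> B'" for b
    proof -
      have eB: "ed b \<in> B" unfolding B_def using that by simp
      obtain v v' where vv: "ed b = (v, v')" by fastforce
      have "y v = w (v, v') + lam (v, v') * y v'" "x v = w (v, v') + lam (v, v') * x v'"
        using ys xs eB vv by auto
      then have "row (ed b) \<bullet> z = 0" unfolding z_def row_inner vv by (simp add: algebra_simps)
      then show ?thesis using ed that unfolding orthogonal_def by (simp add: inner_commute)
    qed
    have "span B' = UNIV" using B'(3) sp by (metis span_mono span_span top.extremum_uniqueI)
    then have "orthogonal z z" using orthogonal_to_span[of z B' z] orth by blast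
    then have "z = 0" unfolding orthogonal_def by simp
    then show ?thesis unfolding z_def by (simp add: vec_eq_iff fun_eq_iff)
  qed
  have "is_basis E w lam B" unfolding is_basis_def using BE cardB xs uniq by blast
  then show ?thesis unfolding basis_valuation_def using xs H by blast
qed

lemma step_case:
  assumes js: "joint_strategy E \<sigma>" and H: "solves_H Vmax E w lam x" and sp: "span (R x) \<noteq> UNIV"
  shows "\<exists>x'. solves_H Vmax E w lam x' \<and> f_strat Vmax w lam \<sigma> x' \<le> f_strat Vmax w lam \<sigma> x
     \<and> dim (R x) < dim (R x')"
proof -
  have "dim (R x) < DIM(real^'v)"
    using sp dim_eq_full[of "R x"] dim_subset_UNIV[of "R x"] by linarith
  then obtain z where z: "z \<noteq> 0" "\<And>y. y \<in> span (R x) \<Longrightarrow> orthogonal z y"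
    by (rule orthogonal_to_subspace_exists) auto
  define d where "d u = z $ u" for u
  have zd: "(\<chi> u. d u) = z" unfolding d_def by (simp add: vec_eq_iff)
  have dne: "d \<noteq> (\<lambda>_. 0)" using z(1) unfolding d_def by (auto simp: vec_eq_iff)
  have olrow: "ol d e = 0 \<longleftrightarrow> row e \<bullet> z = 0" for e unfolding ol_row zd by auto
  have tz: "\<forall>e\<in>tight x. ol d e = 0"
  proof
    fix e assume "e \<in> tight x"
    then have "row e \<in> span (R x)" unfolding R_def by (intro span_base) auto
    then have "orthogonal z (row e)" by (rule z(2))
    then show "ol d e = 0" unfolding olrow orthogonal_def by (simp add: inner_commute)
  qed
  have tz': "\<forall>e\<in>tight x. ol (\<lambda>u. - d u) e = 0" using tz ol_neg by simp
  define c where "c = f_strat Vmax (\<lambda>_. 0) lam \<sigma> d"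
  have "\<exists>d'. (d' = d \<or> d' = (\<lambda>u. - d u)) \<and> f_strat Vmax (\<lambda>_. 0) lam \<sigma> d' \<le> 0 \<and> (\<exists>e\<in>E. ol d' e < 0)"
  proof (cases "c < 0")
    case True
    then have "\<exists>e\<in>E. ol d e < 0" using no_descent[OF js H, of d] c_def by simp
    moreover have "f_strat Vmax (\<lambda>_. 0) lam \<sigma> d \<le> 0" using True c_def by simp
    ultimately show ?thesis by blast
  next
    case False
    show ?thesis
    proof (cases "c > 0")
      case True
      then have neg: "f_strat Vmax (\<lambda>_. 0) lam \<sigma> (\<lambda>u. - d u) < 0" unfolding f_neg c_def by simp
      then have "\<exists>e\<in>E. ol (\<lambda>u. - d u) e < 0" by (rule no_descent[OF js H])
      then show ?thesis using neg by (intro exI[of _ "\<lambda>u. - d u"]) simp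
    next
      case False2: False
      then have c0: "c = 0" using False by simp
      obtain e where e: "e \<in> E" "ol d e \<noteq> 0" using pointed[OF dne] by blast
      show ?thesis
      proof (cases "ol d e < 0")
        case True
        then show ?thesis using e(1) c0 c_def by (intro exI[of _ d]) auto
      next
        case False
        then have "ol (\<lambda>u. - d u) e < 0" using e(2) unfolding ol_neg by simp
        moreover have "f_strat Vmax (\<lambda>_. 0) lam \<sigma> (\<lambda>u. - d u) \<le> 0" unfolding f_neg using c0 c_def by simp
        ultimately show ?thesis using e(1) by (intro exI[of _ "\<lambda>u. - d u"]) auto
      qed
    qed
  qed
  then obtain d' where d': "d' = d \<or> d' = (\<lambda>u. - d u)" "f_strat Vmax (\<lambda>_. 0) lam \<sigma> d' \<le> 0"
    "\<exists>e\<in>E. ol d' e < 0" by blast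
  have tzd: "\<forall>e\<in>tight x. ol d' e = 0" using d'(1) tz tz' by auto
  obtain e0 where e0: "e0 \<in> E" "ol d' e0 < 0" using d'(3) by blast
  obtain x' e' where x': "solves_H Vmax E w lam x'" "f_strat Vmax w lam \<sigma> x' \<le> f_strat Vmax w lam \<sigma> x"
    "tight x \<subseteq> tight x'" "e' \<in> tight x'" "ol d' e' < 0"
    using ratio_step[OF H tzd e0 d'(2)] by blast
  have "ol d e' \<noteq> 0"
  proof
    assume "ol d e' = 0"
    then have "ol d' e' = 0" using d'(1) ol_neg[of d e'] by auto
    then show False using x'(5) by simp
  qed
  then have nz: "row e' \<bullet> z \<noteq> 0" using olrow by simp
  have "row e' \<notin> span (R x)"
  proof
    assume "row e' \<in> span (R x)"
    then have "orthogonal z (row e')" by (rule z(2))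
    then show False using nz unfolding orthogonal_def by (simp add: inner_commute)
  qed
  then have "dim (insert (row e') (R x)) = dim (R x) + 1" by (simp add: dim_insert)
  moreover have "insert (row e') (R x) \<subseteq> R x'" using x'(3,4) unfolding R_def by auto
  then have "dim (insert (row e') (R x)) \<le> dim (R x')" by (rule dim_subset)
  ultimately have "dim (R x) < dim (R x')" by simp
  then show ?thesis using x'(1,2) by blast
qed

lemma reach_basis:
  assumes js: "joint_strategy E \<sigma>"
  shows "solves_H Vmax E w lam x \<Longrightarrow> CARD('v) - dim (R x) \<le> k \<Longrightarrow>
    \<exists>y. basis_valuation Vmax E w lam y \<and> f_strat Vmax w lam \<sigma> y \<le> f_strat Vmax w lam \<sigma> x"
proof (induction k arbitrary: x rule: less_induct)
  case (less k)
  show ?case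
  proof (cases "span (R x) = UNIV")
    case True
    then show ?thesis using base_case[OF less.prems(1)] by blast
  next
    case False
    obtain x' where x': "solves_H Vmax E w lam x'" "f_strat Vmax w lam \<sigma> x' \<le> f_strat Vmax w lam \<sigma> x"
      "dim (R x) < dim (R x')" using step_case[OF js less.prems(1) False] by blast
    have "dim (R x') \<le> CARD('v)" using dim_subset_UNIV[of "R x'"] DIM_v by simp
    then have "CARD('v) - dim (R x') < k" using x'(3) less.prems(2) by linarith
    then obtain y where "basis_valuation Vmax E w lam y" "f_strat Vmax w lam \<sigma> y \<le> f_strat Vmax w lam \<sigma> x'"
      using less.IH[OF _ x'(1) order_refl] by blast
    then show ?thesis using x'(2) by (meson order_trans)
  qed
qed

lemma fmin_opt:
  assumes "optimal_for Vmax E w lam \<sigma> \<nu>"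
  shows "fmin Vmax E w lam \<sigma> = f_strat Vmax w lam \<sigma> \<nu>"
proof -
  have H: "solves_H Vmax E w lam \<nu>" using assms unfolding optimal_for_def basis_valuation_def by blast
  show ?thesis unfolding fmin_def
    by (rule cInf_eq_minimum) (use H assms in \<open>auto simp: optimal_for_def\<close>)
qed

lemma basis_vals_finite: "finite {\<nu>. basis_valuation Vmax E w lam \<nu>}"
proof -
  define th where "th B = (THE x. \<forall>(v, v')\<in>B. x v = w (v, v') + lam (v, v') * x v')" for B
  have "{\<nu>. basis_valuation Vmax E w lam \<nu>} \<subseteq> th ` Pow E"
  proof
    fix \<nu> assume "\<nu> \<in> {\<nu>. basis_valuation Vmax E w lam \<nu>}"
    then obtain B where B: "is_basis E w lam B" "\<forall>(v, v')\<in>B. \<nu> v = w (v, v') + lam (v, v') * \<nu> v'"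
      unfolding basis_valuation_def by blast
    have u: "\<exists>!x. \<forall>(v, v')\<in>B. x v = w (v, v') + lam (v, v') * x v'" and BE: "B \<subseteq> E"
      using B(1) unfolding is_basis_def by blast+
    have "th B = \<nu>" unfolding th_def by (rule the1_equality[of "\<lambda>x. \<forall>(v, v')\<in>B. x v = w (v, v') + lam (v, v') * x v'", OF u B(2)])
    then show "\<nu> \<in> th ` Pow E" using BE by blast
  qed
  then show ?thesis by (rule finite_subset) simp
qed

lemma exists_optimal:
  assumes js: "joint_strategy E \<sigma>"
  shows "\<exists>\<nu>. optimal_for Vmax E w lam \<sigma> \<nu>"
proof -
  obtain y where fp: "T y = y" using fixpoint_exists by blast
  have yH: "solves_H Vmax E w lam y" by (rule fixpoint_props(1)[OF fp])
  define C where "C = {\<nu>. basis_valuation Vmax E w lam \<nu>}"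
  have Cfin: "finite C" unfolding C_def by (rule basis_vals_finite)
  obtain y0 where "basis_valuation Vmax E w lam y0" using reach_basis[OF js yH order_refl] by blast
  then have Cne: "C \<noteq> {}" unfolding C_def by blast
  have "Min (f_strat Vmax w lam \<sigma> ` C) \<in> f_strat Vmax w lam \<sigma> ` C" using Cfin Cne by (intro Min_in) auto
  then obtain \<nu> where \<nu>: "\<nu> \<in> C" "Min (f_strat Vmax w lam \<sigma> ` C) = f_strat Vmax w lam \<sigma> \<nu>" by auto
  have "f_strat Vmax w lam \<sigma> \<nu> \<le> f_strat Vmax w lam \<sigma> x" if xH: "solves_H Vmax E w lam x" for x
  proof -
    obtain y' where y': "basis_valuation Vmax E w lam y'" "f_strat Vmax w lam \<sigma> y' \<le> f_strat Vmax w lam \<sigma> x"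
      using reach_basis[OF js xH order_refl] by blast
    have "f_strat Vmax w lam \<sigma> \<nu> \<le> f_strat Vmax w lam \<sigma> y'"
      unfolding \<nu>(2)[symmetric] using Cfin y'(1) unfolding C_def by (intro Min_le) auto
    then show ?thesis using y'(2) by linarith
  qed
  then have "optimal_for Vmax E w lam \<sigma> \<nu>" using \<nu>(1) unfolding optimal_for_def C_def by blast
  then show ?thesis by blast
qed

lemma opt_strategy:
  "\<exists>\<tau>. joint_strategy E \<tau> \<and> fmin Vmax E w lam \<tau> = 0"
proof -
  obtain y where fp: "T y = y" using fixpoint_exists by blast
  have yH: "solves_H Vmax E w lam y" by (rule fixpoint_props(1)[OF fp])
  obtain \<tau> where \<tau>: "joint_strategy E \<tau>" "\<forall>u. y u = w (u, \<tau> u) + lam (u, \<tau> u) * y (\<tau> u)"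
    using fixpoint_props(2)[OF fp] by blast
  have "offset Vmax w lam y (v, \<tau> v) = 0" for v using \<tau>(2)[rule_format, of v] unfolding offset_def by simp
  then have f0: "f_strat Vmax w lam \<tau> y = 0" unfolding f_strat_def by simp
  have "fmin Vmax E w lam \<tau> = 0" unfolding fmin_def
    by (rule cInf_eq_minimum) (use yH f0 f_nonneg[OF \<tau>(1)] in auto)
  then show ?thesis using \<tau>(1) by blast
qed

end

theorem corollary3p4:
  fixes Vmin Vmax :: "'v::finite set" and E :: "('v \<times> 'v) set"
    and w lam :: "'v \<times> 'v \<Rightarrow> real"
  assumes "is_dpg Vmin Vmax E w lam"
  shows
    \<comment> \<open>every step can be carried out: an optimal solution exists\<close>
    "(\<forall>\<sigma>. joint_strategy E \<sigma> \<longrightarrow> (\<exists>\<nu>. optimal_for Vmax E w lam \<sigma> \<nu>))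
     \<comment> \<open>if not returning, a better joint strategy exists\<close>
   \<and> (\<forall>\<sigma> \<nu>. joint_strategy E \<sigma> \<and> optimal_for Vmax E w lam \<sigma> \<nu> \<and> f_strat Vmax w lam \<sigma> \<nu> \<noteq> 0
        \<longrightarrow> (\<exists>\<sigma>'. joint_strategy E \<sigma>' \<and> better Vmax E w lam \<sigma>' \<sigma>))
     \<comment> \<open>termination: no infinite run, whatever the choices\<close>
   \<and> \<not> (\<exists>\<sigma>s \<nu>s. \<forall>i. joint_strategy E (\<sigma>s i) \<and> optimal_for Vmax E w lam (\<sigma>s i) (\<nu>s i)
        \<and> f_strat Vmax w lam (\<sigma>s i) (\<nu>s i) \<noteq> 0 \<and> better Vmax E w lam (\<sigma>s (Suc i)) (\<sigma>s i))
     \<comment> \<open>correctness of the returned valuation\<close>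
   \<and> (\<forall>\<sigma> \<nu>. joint_strategy E \<sigma> \<and> optimal_for Vmax E w lam \<sigma> \<nu> \<and> f_strat Vmax w lam \<sigma> \<nu> = 0
        \<longrightarrow> \<nu> = game_val Vmax E w lam)"
proof -
  interpret dpg Vmin Vmax E w lam by (unfold_locales) (rule assms)
  have P1: "\<forall>\<sigma>. joint_strategy E \<sigma> \<longrightarrow> (\<exists>\<nu>. optimal_for Vmax E w lam \<sigma> \<nu>)"
    using exists_optimal by blast
  have P2: "\<forall>\<sigma> \<nu>. joint_strategy E \<sigma> \<and> optimal_for Vmax E w lam \<sigma> \<nu> \<and> f_strat Vmax w lam \<sigma> \<nu> \<noteq> 0
        \<longrightarrow> (\<exists>\<sigma>'. joint_strategy E \<sigma>' \<and> better Vmax E w lam \<sigma>' \<sigma>)"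
  proof (intro allI impI)
    fix \<sigma> \<nu>
    assume a: "joint_strategy E \<sigma> \<and> optimal_for Vmax E w lam \<sigma> \<nu> \<and> f_strat Vmax w lam \<sigma> \<nu> \<noteq> 0"
    obtain \<tau> where \<tau>: "joint_strategy E \<tau>" "fmin Vmax E w lam \<tau> = 0" using opt_strategy by blast
    have H: "solves_H Vmax E w lam \<nu>" using a unfolding optimal_for_def basis_valuation_def by blast
    have "0 \<le> f_strat Vmax w lam \<sigma> \<nu>" using f_nonneg[OF _ H] a by blast
    then have "0 < fmin Vmax E w lam \<sigma>" using fmin_opt[of \<sigma> \<nu>] a by simp
    then have "better Vmax E w lam \<tau> \<sigma>" unfolding better_def using \<tau>(2) by simp
    then show "\<exists>\<sigma>'. joint_strategy E \<sigma>' \<and> better Vmax E w lam \<sigma>' \<sigma>" using \<tau>(1) by blast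
  qed
  have P3: "\<not> (\<exists>\<sigma>s \<nu>s. \<forall>i. joint_strategy E (\<sigma>s i) \<and> optimal_for Vmax E w lam (\<sigma>s i) (\<nu>s i)
        \<and> f_strat Vmax w lam (\<sigma>s i) (\<nu>s i) \<noteq> 0 \<and> better Vmax E w lam (\<sigma>s (Suc i)) (\<sigma>s i))"
  proof
    assume "\<exists>\<sigma>s \<nu>s. \<forall>i. joint_strategy E (\<sigma>s i) \<and> optimal_for Vmax E w lam (\<sigma>s i) (\<nu>s i)
        \<and> f_strat Vmax w lam (\<sigma>s i) (\<nu>s i) \<noteq> 0 \<and> better Vmax E w lam (\<sigma>s (Suc i)) (\<sigma>s i)"
    then obtain \<sigma>s :: "nat \<Rightarrow> 'v \<Rightarrow> 'v" where b: "\<And>i. better Vmax E w lam (\<sigma>s (Suc i)) (\<sigma>s i)" by blast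
    define F where "F i = - fmin Vmax E w lam (\<sigma>s i)" for i
    have "F i < F (Suc i)" for i using b[of i] unfolding better_def F_def by simp
    then have mono: "i < j \<Longrightarrow> F i < F j" for i j by (rule lift_Suc_mono_less)
    have "inj \<sigma>s"
    proof (rule injI)
      fix i j assume eq: "\<sigma>s i = \<sigma>s j"
      show "i = j"
      proof (rule ccontr)
        assume "i \<noteq> j"
        have "F i = F j" unfolding F_def eq ..
        then show False using mono[of i j] mono[of j i] \<open>i \<noteq> j\<close> by (metis less_irrefl nat_neq_iff)
      qed
    qed
    moreover have "finite (range \<sigma>s)" by simp
    ultimately have "finite (UNIV :: nat set)" using finite_imageD[of \<sigma>s UNIV] by blast
    then show False by simp
  qed
  have P4: "\<forall>\<sigma> \<nu>. joint_strategy E \<sigma> \<and> optimal_for Vmax E w lam \<sigma> \<nu> \<and> f_strat Vmax w lam \<sigma> \<nu> = 0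
        \<longrightarrow> \<nu> = game_val Vmax E w lam"
  proof (intro allI impI)
    fix \<sigma> \<nu>
    assume a: "joint_strategy E \<sigma> \<and> optimal_for Vmax E w lam \<sigma> \<nu> \<and> f_strat Vmax w lam \<sigma> \<nu> = 0"
    have H: "solves_H Vmax E w lam \<nu>" using a unfolding optimal_for_def basis_valuation_def by blast
    have nn: "\<forall>u\<in>UNIV. 0 \<le> offset Vmax w lam \<nu> (u, \<sigma> u)"
      using a H unfolding solves_H_iff joint_strategy_def by blast
    have s0: "(\<Sum>u\<in>UNIV. offset Vmax w lam \<nu> (u, \<sigma> u)) = 0" using a unfolding f_strat_def by simp
    have z: "\<forall>u\<in>UNIV. offset Vmax w lam \<nu> (u, \<sigma> u) = 0"
      using sum_nonneg_eq_0_iff[of UNIV "\<lambda>u. offset Vmax w lam \<nu> (u, \<sigma> u)"] nn s0 by simp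
    have t: "\<nu> u = w (u, \<sigma> u) + lam (u, \<sigma> u) * \<nu> (\<sigma> u)" for u
      using z[rule_format, of u] unfolding offset_def by (simp split: if_splits)
    have js: "joint_strategy E \<sigma>" using a by blast
    have "game_val Vmax E w lam = \<nu>" by (rule val_eq[OF H js t])
    then show "\<nu> = game_val Vmax E w lam" by simp
  qed
  show ?thesis by (intro conjI P1 P2 P3 P4)
qed

end
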